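(* Let $(\mathcal{X},c)$ be a metric space with diameter at most $1$, let $\mu,\tilde\mu$ be probability distributions on $\mathcal{X}$, let $p\ge1$, $k>0$, and let $\alpha\in(0,1)$ be a constant. Let $\delta=\|\mu-\tilde\mu\|_{\mathrm{TV}}$. Then $$\min\left\{\delta(1-\alpha),\tfrac1k W_{p,1-\delta(1-\alpha)}(\mu,\tilde\mu)\right\}\le\mathrm{RPW}_{p,k}(\mu,\tilde\mu)\le\min\left\{\delta,\tfrac1kW_p(\mu,\tilde\mu)\right\}.$$
   Context: $c(x,y)\le1$ for all $x,y$; distributions are Borel probability measures. $\|\mu-\nu\|_{\mathrm{TV}}=\sup_A|\mu(A)-\nu(A)|$. For $p\in[1,\infty)$ and $\beta\in[0,1]$, a partial transport plan of mass $\beta$ between $\mu,\nu$ is a nonnegative measure $\gamma$ on $\mathcal{X}\times\mathcal{X}$ of total mass $\beta$ with first marginal $\le\mu$ and second marginal $\le\nu$ (setwise); its cost is $w_p(\gamma)=(\int c^p\,d\gamma)^{1/p}$, and $W_{p,\beta}(\mu,\nu)$ is the infimum of $w_p(\gamma)$ over such $\gamma$; $W_p=W_{p,1}$. For $k\ge0$, $\mathrm{RPW}_{p,k}(\mu,\nu)=\inf\{\varepsilon\in[0,1]: W_{p,1-\varepsilon}(\mu,\nu)\le k\varepsilon\}$. *)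

theory Defs
  imports "HOL-Probability.Probability"
begin

definition borel_prob :: "'a::metric_space measure \<Rightarrow> bool" where
  "borel_prob M \<longleftrightarrow> prob_space M \<and> sets M = sets borel"

definition tv_dist :: "'a::metric_space measure \<Rightarrow> 'a measure \<Rightarrow> real" where
  "tv_dist \<mu> \<nu> = Sup {\<bar>measure \<mu> A - measure \<nu> A\<bar> | A. A \<in> sets borel}"

definition partial_plan ::
  "'a::metric_space measure \<Rightarrow> 'a measure \<Rightarrow> real \<Rightarrow> ('a \<times> 'a) measure \<Rightarrow> bool" where
  "partial_plan \<mu> \<nu> \<beta> \<gamma> \<longleftrightarrow>
     sets \<gamma> = sets borel \<and> emeasure \<gamma> (space \<gamma>) = ennreal \<beta> \<and>
     (\<forall>A \<in> sets borel. emeasure \<gamma> (A \<times> UNIV) \<le> emeasure \<mu> A) \<and>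
     (\<forall>B \<in> sets borel. emeasure \<gamma> (UNIV \<times> B) \<le> emeasure \<nu> B)"

definition plan_cost :: "real \<Rightarrow> ('a::metric_space \<times> 'a) measure \<Rightarrow> ereal" where
  "plan_cost p \<gamma> = ereal (enn2real (\<integral>\<^sup>+ z. ennreal (dist (fst z) (snd z) powr p) \<partial>\<gamma>) powr (1 / p))"

text \<open>Partial Wasserstein distance W_{p,beta} (infimum over plans; +infinity if none).\<close>
definition W_partial :: "real \<Rightarrow> real \<Rightarrow> 'a::metric_space measure \<Rightarrow> 'a measure \<Rightarrow> ereal" where
  "W_partial p \<beta> \<mu> \<nu> = (INF \<gamma> \<in> {\<gamma>. partial_plan \<mu> \<nu> \<beta> \<gamma>}. plan_cost p \<gamma>)"

definition W_p :: "real \<Rightarrow> 'a::metric_space measure \<Rightarrow> 'a measure \<Rightarrow> ereal" where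
  "W_p p \<mu> \<nu> = W_partial p 1 \<mu> \<nu>"

definition RPW :: "real \<Rightarrow> real \<Rightarrow> 'a::metric_space measure \<Rightarrow> 'a measure \<Rightarrow> real" where
  "RPW p k \<mu> \<nu> = Inf {\<epsilon> \<in> {0..1}. W_partial p (1 - \<epsilon>) \<mu> \<nu> \<le> ereal (k * \<epsilon>)}"

end

theory Submission
  imports Defs
begin

lemma cost_meas:
  "(\<lambda>z::'a::metric_space\<times>'a. ennreal (dist (fst z) (snd z) powr p)) \<in> borel_measurable borel"
proof -
  have g: "(\<lambda>z::'a\<times>'a. dist (fst z) (snd z)) \<in> borel_measurable borel"
    by (intro borel_measurable_continuous_onI continuous_intros)
  have h: "(\<lambda>t::real. ennreal (t powr p)) \<in> borel_measurable borel" by measurable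
  show ?thesis using measurable_comp[OF g h] by (simp add: comp_def)
qed

lemma plan_scale:
  assumes pp: "partial_plan \<mu> \<nu> \<beta> \<gamma>" and b: "0 \<le> \<beta>'" "\<beta>' \<le> \<beta>" and p: "p > 0"
  shows "\<exists>\<gamma>'. partial_plan \<mu> \<nu> \<beta>' \<gamma>' \<and> plan_cost p \<gamma>' \<le> plan_cost p \<gamma>"
proof (cases "\<beta> = \<beta>'")
  case True then show ?thesis using pp by auto
next
  case False
  then have bp: "\<beta> > 0" using b by auto
  define r where "r = \<beta>' / \<beta>"
  have r: "0 \<le> r" "r \<le> 1" using b bp by (auto simp: r_def field_simps)
  define \<gamma>' where "\<gamma>' = scale_measure (ennreal r) \<gamma>"
  have r1: "ennreal r * x \<le> x" for x :: ennreal
    using mult_right_mono[of "ennreal r" 1 x] r by (simp add: ennreal_le_1)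
  have "partial_plan \<mu> \<nu> \<beta>' \<gamma>'"
    unfolding partial_plan_def
  proof (intro conjI ballI)
    show "sets \<gamma>' = sets borel" using pp by (simp add: \<gamma>'_def partial_plan_def)
    show "emeasure \<gamma>' (space \<gamma>') = ennreal \<beta>'"
      using pp r bp b by (simp add: \<gamma>'_def partial_plan_def space_scale_measure r_def
          ennreal_mult'[symmetric])
    show "emeasure \<gamma>' (A \<times> UNIV) \<le> emeasure \<mu> A" if "A \<in> sets borel" for A
      using pp that r1 order_trans by (fastforce simp: \<gamma>'_def partial_plan_def)
    show "emeasure \<gamma>' (UNIV \<times> A) \<le> emeasure \<nu> A" if "A \<in> sets borel" for A
      using pp that r1 order_trans by (fastforce simp: \<gamma>'_def partial_plan_def)
  qed
  moreover have "plan_cost p \<gamma>' \<le> plan_cost p \<gamma>"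
  proof -
    have m: "(\<lambda>z. ennreal (dist (fst z) (snd z) powr p)) \<in> borel_measurable \<gamma>"
      using cost_meas pp measurable_cong_sets unfolding partial_plan_def by blast
    have "enn2real (\<integral>\<^sup>+ z. ennreal (dist (fst z) (snd z) powr p) \<partial>\<gamma>')
        = r * enn2real (\<integral>\<^sup>+ z. ennreal (dist (fst z) (snd z) powr p) \<partial>\<gamma>)"
      unfolding \<gamma>'_def nn_integral_scale_measure[OF m] enn2real_mult using r by simp
    also have "\<dots> \<le> enn2real (\<integral>\<^sup>+ z. ennreal (dist (fst z) (snd z) powr p) \<partial>\<gamma>)"
      using r mult_right_mono[of r 1] by (simp add: enn2real_nonneg)
    finally show ?thesis unfolding plan_cost_def
      using p by (auto intro!: powr_mono2 simp: enn2real_nonneg)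
  qed
  ultimately show ?thesis by blast
qed

lemma W_mono:
  assumes "0 \<le> \<beta>'" "\<beta>' \<le> \<beta>" "p > 0"
  shows "W_partial p \<beta>' \<mu> \<nu> \<le> W_partial p \<beta> \<mu> \<nu>"
  unfolding W_partial_def
  by (rule INF_mono) (use plan_scale[OF _ assms(1,2,3)] in auto)

lemma null_plan: "partial_plan \<mu> \<nu> 0 (null_measure borel)"
  by (simp add: partial_plan_def)

lemma W_zero: fixes \<mu> \<nu> :: "'a::metric_space measure" shows "W_partial p 0 \<mu> \<nu> \<le> 0"
proof -
  have "W_partial p 0 \<mu> \<nu> \<le> plan_cost p (null_measure (borel :: ('a \<times> 'a) measure))"
    unfolding W_partial_def by (rule INF_lower) (simp add: null_plan[of \<mu> \<nu>])
  also have "\<dots> = 0" by (simp add: plan_cost_def)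
  finally show ?thesis .
qed

lemma tv_facts:
  assumes "borel_prob \<mu>" "borel_prob \<nu>"
  shows "bdd_above {\<bar>measure \<mu> A - measure \<nu> A\<bar> | A. A \<in> sets borel}"
    and "0 \<le> tv_dist \<mu> \<nu>" "tv_dist \<mu> \<nu> \<le> 1"
    and "\<And>A. A \<in> sets borel \<Longrightarrow> \<bar>measure \<mu> A - measure \<nu> A\<bar> \<le> tv_dist \<mu> \<nu>"
proof -
  interpret m: prob_space \<mu> using assms by (simp add: borel_prob_def)
  interpret n: prob_space \<nu> using assms by (simp add: borel_prob_def)
  have b: "\<bar>measure \<mu> A - measure \<nu> A\<bar> \<le> 1" for A
    using m.prob_le_1[of A] n.prob_le_1[of A] measure_nonneg[of \<mu> A] measure_nonneg[of \<nu> A]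
    by linarith
  show bd: "bdd_above {\<bar>measure \<mu> A - measure \<nu> A\<bar> | A. A \<in> sets borel}"
    by (rule bdd_aboveI[where M=1]) (use b in blast)
  show le: "\<And>A. A \<in> sets borel \<Longrightarrow> \<bar>measure \<mu> A - measure \<nu> A\<bar> \<le> tv_dist \<mu> \<nu>"
    unfolding tv_dist_def by (rule cSup_upper[OF _ bd]) auto
  show "0 \<le> tv_dist \<mu> \<nu>" using le[of "{}"] by simp
  show "tv_dist \<mu> \<nu> \<le> 1" unfolding tv_dist_def
    by (rule cSup_least) (use b in blast)+
qed

lemma min_plan:
  assumes "borel_prob \<mu>" "borel_prob \<nu>"
  shows "\<exists>d \<gamma>. 0 \<le> d \<and> d \<le> tv_dist \<mu> \<nu> \<and> partial_plan \<mu> \<nu> (1 - d) \<gamma> \<and> plan_cost p \<gamma> = 0"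
proof -
  interpret m: prob_space \<mu> using assms by (simp add: borel_prob_def)
  interpret n: prob_space \<nu> using assms by (simp add: borel_prob_def)
  have sm: "sets \<mu> = sets borel" and sn: "sets \<nu> = sets borel" using assms by (auto simp: borel_prob_def)
  have spm: "space \<mu> = UNIV" using sets_eq_imp_space_eq[OF sm] by simp
  have spn: "space \<nu> = UNIV" using sets_eq_imp_space_eq[OF sn] by simp
  define \<rho> where "\<rho> = measure_of UNIV (sets borel) (\<lambda>A. emeasure \<mu> A + emeasure \<nu> A)"
  have sa: "sigma_algebra UNIV (sets (borel::'a measure))"
    using sets.sigma_algebra_axioms[of "borel::'a measure"] by simp
  have em\<rho>: "emeasure \<rho> A = emeasure \<mu> A + emeasure \<nu> A" if "A \<in> sets borel" for A
    unfolding \<rho>_def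
  proof (rule emeasure_measure_of_sigma[OF sa _ _ that])
    show "positive (sets borel) (\<lambda>A. emeasure \<mu> A + emeasure \<nu> A)"
      by (simp add: positive_def)
    show "countably_additive (sets borel) (\<lambda>A. emeasure \<mu> A + emeasure \<nu> A)"
    proof (rule countably_additiveI)
      fix A :: "nat \<Rightarrow> 'a set" assume *: "range A \<subseteq> sets borel" "disjoint_family A"
      show "(\<Sum>i. emeasure \<mu> (A i) + emeasure \<nu> (A i)) = emeasure \<mu> (\<Union>i. A i) + emeasure \<nu> (\<Union>i. A i)"
        using * sm sn by (simp add: suminf_add[symmetric] suminf_emeasure)
    qed
  qed
  have s\<rho>: "sets \<rho> = sets borel" by (simp add: \<rho>_def sigma_algebra.sigma_sets_eq[OF sa])
  have sp\<rho>: "space \<rho> = UNIV" by (simp add: \<rho>_def)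
  interpret r: finite_measure \<rho>
    by (rule finite_measureI) (simp add: sp\<rho> em\<rho>)
  have acm: "absolutely_continuous \<rho> \<mu>" and acn: "absolutely_continuous \<rho> \<nu>"
    unfolding absolutely_continuous_def null_sets_def using em\<rho> s\<rho> sm sn by auto
  define f where "f = RN_deriv \<rho> \<mu>"
  define g where "g = RN_deriv \<rho> \<nu>"
  have df: "density \<rho> f = \<mu>" unfolding f_def by (rule r.density_RN_deriv[OF acm]) (simp add: sm s\<rho>)
  have dg: "density \<rho> g = \<nu>" unfolding g_def by (rule r.density_RN_deriv[OF acn]) (simp add: sn s\<rho>)
  have fm[measurable]: "f \<in> borel_measurable \<rho>" and gm[measurable]: "g \<in> borel_measurable \<rho>"
    by (auto simp: f_def g_def)
  define m where "m = density \<rho> (\<lambda>x. min (f x) (g x))"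
  have sm': "sets m = sets borel" by (simp add: m_def s\<rho>)
  have mle\<mu>: "emeasure m A \<le> emeasure \<mu> A" and mle\<nu>: "emeasure m A \<le> emeasure \<nu> A" for A
  proof -
    show "emeasure m A \<le> emeasure \<mu> A"
    proof (cases "A \<in> sets borel")
      case True
      then show ?thesis unfolding m_def df[symmetric] using s\<rho>
        by (auto simp: emeasure_density intro!: nn_integral_mono split: split_indicator)
    qed (simp add: emeasure_notin_sets sm')
    show "emeasure m A \<le> emeasure \<nu> A"
    proof (cases "A \<in> sets borel")
      case True
      then show ?thesis unfolding m_def dg[symmetric] using s\<rho>
        by (auto simp: emeasure_density intro!: nn_integral_mono split: split_indicator)
    qed (simp add: emeasure_notin_sets sm')
  qed
  define S where "S = {x. g x < f x}"
  have "{x\<in>space \<rho>. g x < f x} \<in> sets \<rho>" by measurable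
  then have Sr: "S \<in> sets \<rho>" by (simp add: S_def sp\<rho>)
  then have S: "S \<in> sets borel" using s\<rho> by simp
  have "emeasure m UNIV = (\<integral>\<^sup>+ x. min (f x) (g x) \<partial>\<rho>)"
    unfolding m_def by (subst emeasure_density) (auto simp: sp\<rho>[symmetric])
  also have "\<dots> = (\<integral>\<^sup>+ x. f x * indicator (-S) x + g x * indicator S x \<partial>\<rho>)"
    by (intro nn_integral_cong) (auto simp: S_def min_def split: split_indicator)
  also have "\<dots> = (\<integral>\<^sup>+ x. f x * indicator (-S) x \<partial>\<rho>) + (\<integral>\<^sup>+ x. g x * indicator S x \<partial>\<rho>)"
    using Sr by (intro nn_integral_add) auto
  also have "\<dots> = emeasure \<mu> (-S) + emeasure \<nu> S"
    using Sr by (simp add: df[symmetric] dg[symmetric] emeasure_density Compl_eq_Diff_UNIV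
        sets.compl_sets sp\<rho> sets.top[of \<rho>, unfolded sp\<rho>] sets.Diff)
  finally have mU: "emeasure m UNIV = emeasure \<mu> (-S) + emeasure \<nu> S" .
  define d where "d = measure \<mu> S - measure \<nu> S"
  have cS: "measure \<mu> (-S) = 1 - measure \<mu> S"
    using m.prob_compl[of S] S sm spm by (simp add: Compl_eq_Diff_UNIV)
  have mU': "emeasure m UNIV = ennreal (1 - d)"
    unfolding mU m.emeasure_eq_measure n.emeasure_eq_measure d_def cS
    by (simp add: ennreal_plus[symmetric] del: ennreal_plus, simp add: algebra_simps)
  have "emeasure m UNIV \<le> emeasure \<mu> UNIV" by (rule mle\<mu>)
  then have "1 - d \<le> 1" unfolding mU' using m.emeasure_space_1 spm by simp
  then have d0: "0 \<le> d" by simp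
  have dtv: "d \<le> tv_dist \<mu> \<nu>" using tv_facts(4)[OF assms S] unfolding d_def by linarith
  define \<gamma> where "\<gamma> = distr m borel (\<lambda>x. (x, x))"
  have dm: "(\<lambda>x::'a. (x, x)) \<in> measurable m borel"
  proof -
    have "(\<lambda>x::'a. (x, x)) \<in> borel_measurable borel"
      by (intro borel_measurable_continuous_onI continuous_intros)
    then show ?thesis by (simp add: measurable_cong_sets[OF sm' refl])
  qed
  have spm': "space m = UNIV" using sets_eq_imp_space_eq[OF sm'] by simp
  have "partial_plan \<mu> \<nu> (1 - d) \<gamma>"
    unfolding partial_plan_def
  proof (intro conjI ballI)
    show "sets \<gamma> = sets borel" by (simp add: \<gamma>_def)
    show "emeasure \<gamma> (space \<gamma>) = ennreal (1 - d)"
      using dm mU' spm' by (simp add: \<gamma>_def emeasure_distr)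
    show "emeasure \<gamma> (A \<times> UNIV) \<le> emeasure \<mu> A" if "A \<in> sets borel" for A
    proof (cases "A \<times> UNIV \<in> sets (borel :: ('a \<times> 'a) measure)")
      case True
      have "(\<lambda>x. (x, x)) -` (A \<times> UNIV) \<inter> space m = A" using spm' by auto
      then show ?thesis using True dm mle\<mu> by (simp add: \<gamma>_def emeasure_distr)
    qed (simp add: \<gamma>_def emeasure_notin_sets)
    show "emeasure \<gamma> (UNIV \<times> A) \<le> emeasure \<nu> A" if "A \<in> sets borel" for A
    proof (cases "UNIV \<times> A \<in> sets (borel :: ('a \<times> 'a) measure)")
      case True
      have "(\<lambda>x. (x, x)) -` (UNIV \<times> A) \<inter> space m = A" using spm' by auto
      then show ?thesis using True dm mle\<nu> by (simp add: \<gamma>_def emeasure_distr)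
    qed (simp add: \<gamma>_def emeasure_notin_sets)
  qed
  moreover have "plan_cost p \<gamma> = 0"
  proof -
    have sd: "sets (distr m borel (\<lambda>x::'a. (x, x))) = sets borel" by simp
    have cm: "(\<lambda>z. ennreal (dist (fst z) (snd z) powr p)) \<in> borel_measurable (distr m borel (\<lambda>x::'a. (x, x)))"
      using cost_meas sd measurable_cong_sets by blast
    have "(\<integral>\<^sup>+ z. ennreal (dist (fst z) (snd z) powr p) \<partial>\<gamma>) = (\<integral>\<^sup>+ x. ennreal (dist x x powr p) \<partial>m)"
      unfolding \<gamma>_def using nn_integral_distr[OF dm cm] by simp
    also have "\<dots> = 0" by simp
    finally show ?thesis by (simp add: plan_cost_def)
  qed
  ultimately show ?thesis using d0 dtv by blast
qed


lemma W_nonneg: "0 \<le> W_partial p \<beta> \<mu> \<nu>"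
  unfolding W_partial_def plan_cost_def by (rule INF_greatest) simp

theorem lemmaA1:
  fixes \<mu> \<nu> :: "'a::metric_space measure" and p k \<alpha> :: real
  assumes diam: "\<And>x y::'a. dist x y \<le> 1"
    and "borel_prob \<mu>" and "borel_prob \<nu>"
    and "p \<ge> 1" and "k > 0" and "0 < \<alpha>" and "\<alpha> < 1"
  shows "min (ereal (tv_dist \<mu> \<nu> * (1 - \<alpha>)))
             (W_partial p (1 - tv_dist \<mu> \<nu> * (1 - \<alpha>)) \<mu> \<nu> / ereal k)
           \<le> ereal (RPW p k \<mu> \<nu>)
       \<and> ereal (RPW p k \<mu> \<nu>) \<le> min (ereal (tv_dist \<mu> \<nu>)) (W_p p \<mu> \<nu> / ereal k)"
proof -
  have p0: "p > 0" using assms by simp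
  have k0: "k > 0" using assms by simp
  define E where "E = {\<epsilon> \<in> {0..1}. W_partial p (1 - \<epsilon>) \<mu> \<nu> \<le> ereal (k * \<epsilon>)}"
  define R where "R = RPW p k \<mu> \<nu>"
  have R: "R = Inf E" unfolding R_def E_def RPW_def ..
  have "W_partial p (1 - 1) \<mu> \<nu> \<le> ereal (k * 1)"
    using W_zero[of p \<mu> \<nu>] k0 by (simp add: order_trans[of _ 0])
  then have E1: "1 \<in> E" unfolding E_def by simp
  have Ene: "E \<noteq> {}" using E1 by blast
  have bdd: "bdd_below E" unfolding E_def by (rule bdd_belowI[where m=0]) auto
  have R0: "0 \<le> R" unfolding R using Ene by (rule cInf_greatest) (auto simp: E_def)
  have R1: "R \<le> 1" unfolding R by (rule cInf_lower[OF E1 bdd])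
  have tv0: "0 \<le> tv_dist \<mu> \<nu>" and tv1: "tv_dist \<mu> \<nu> \<le> 1" using tv_facts assms by auto
  have up1: "R \<le> tv_dist \<mu> \<nu>"
  proof -
    obtain d \<gamma> where d: "0 \<le> d" "d \<le> tv_dist \<mu> \<nu>" "partial_plan \<mu> \<nu> (1 - d) \<gamma>" "plan_cost p \<gamma> = 0"
      using min_plan[OF assms(2,3), of p] by blast
    have "W_partial p (1 - d) \<mu> \<nu> \<le> plan_cost p \<gamma>"
      unfolding W_partial_def by (rule INF_lower) (simp add: d)
    also have "\<dots> \<le> ereal (k * d)" using d k0 by simp
    finally have "d \<in> E" using d tv1 unfolding E_def by simp
    then have "R \<le> d" unfolding R by (rule cInf_lower[OF _ bdd])
    then show ?thesis using d by simp
  qed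
  have up2: "ereal R \<le> W_p p \<mu> \<nu> / ereal k"
  proof (cases "W_p p \<mu> \<nu>")
    case (real w)
    have w0: "0 \<le> w" using W_nonneg[of p 1 \<mu> \<nu>] real by (simp add: W_p_def)
    have "R \<le> w / k"
    proof (rule field_le_epsilon)
      fix e :: real assume e: "0 < e"
      show "R \<le> w / k + e"
      proof (cases "1 \<le> w / k + e")
        case True then show ?thesis using R1 by simp
      next
        case False
        define \<epsilon> where "\<epsilon> = w / k + e"
        have eps: "0 \<le> \<epsilon>" "\<epsilon> \<le> 1" using False w0 k0 e by (auto simp: \<epsilon>_def)
        have "W_partial p (1 - \<epsilon>) \<mu> \<nu> \<le> W_partial p 1 \<mu> \<nu>"
          using eps p0 by (intro W_mono) auto
        also have "\<dots> = ereal w" using real by (simp add: W_p_def)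
        also have "\<dots> \<le> ereal (k * \<epsilon>)" using k0 e by (simp add: \<epsilon>_def algebra_simps)
        finally have "\<epsilon> \<in> E" using eps unfolding E_def by simp
        then show ?thesis unfolding R \<epsilon>_def[symmetric] by (rule cInf_lower[OF _ bdd])
      qed
    qed
    then show ?thesis using real k0 by simp
  next
    case PInf then show ?thesis using k0 by simp
  next
    case MInf then show ?thesis using W_nonneg[of p 1 \<mu> \<nu>] by (simp add: W_p_def)
  qed
  define a where "a = tv_dist \<mu> \<nu> * (1 - \<alpha>)"
  have a0: "0 \<le> a" and a1: "a \<le> 1" using tv0 tv1 assms
    by (auto simp: a_def intro: mult_nonneg_nonneg order_trans[OF mult_right_le_one_le])
  have low: "min (ereal a) (W_partial p (1 - a) \<mu> \<nu> / ereal k) \<le> ereal R"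
  proof (cases "a \<le> R")
    case True then show ?thesis by (simp add: min.coboundedI1)
  next
    case False
    then have Ra: "R < a" by simp
    have key: "W_partial p (1 - a) \<mu> \<nu> \<le> ereal (k * \<epsilon>)" if "\<epsilon> \<in> E" "\<epsilon> < a" for \<epsilon>
    proof -
      have "W_partial p (1 - a) \<mu> \<nu> \<le> W_partial p (1 - \<epsilon>) \<mu> \<nu>"
        using that a1 p0 by (intro W_mono) auto
      also have "\<dots> \<le> ereal (k * \<epsilon>)" using that by (simp add: E_def)
      finally show ?thesis .
    qed
    obtain \<epsilon>0 where e0: "\<epsilon>0 \<in> E" "\<epsilon>0 < a" using cInf_lessD[OF Ene Ra[unfolded R]] by blast
    have Wle: "W_partial p (1 - a) \<mu> \<nu> \<le> ereal (k * \<epsilon>0)" by (rule key[OF e0])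
    obtain w where w: "W_partial p (1 - a) \<mu> \<nu> = ereal w"
      using Wle W_nonneg[of p "1 - a" \<mu> \<nu>] by (cases "W_partial p (1 - a) \<mu> \<nu>") auto
    have "w / k \<le> R"
    proof (rule ccontr)
      assume "\<not> w / k \<le> R"
      then have "Inf E < min a (w / k)" using Ra R by simp
      then obtain \<epsilon> where "\<epsilon> \<in> E" "\<epsilon> < min a (w / k)" using cInf_lessD[OF Ene] by blast
      then have "\<epsilon> \<in> E" "\<epsilon> < a" "k * \<epsilon> < w" using k0 by (auto simp: field_simps)
      with key[of \<epsilon>] w show False by simp
    qed
    then have "W_partial p (1 - a) \<mu> \<nu> / ereal k \<le> ereal R" using w k0 by simp
    then show ?thesis by (simp add: min.coboundedI2)
  qed
  show ?thesis using low up1 up2 unfolding a_def R_def by simp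
qed

end
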